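(* Let $X_1, X_2 \subseteq \mathrm{VF}^n\times\mathrm{VF}^m$ with $\mathrm{pr}_{\le n}X_1=\mathrm{pr}_{\le n}X_2=Z$, let $\bar a\in\mathrm{VF}^n$, and suppose $\lim_{Z\to\bar a}X_i = L_i$ for $i=1,2$. Then $\lim_{Z\to\bar a}(X_1\cup X_2)=L_1\cup L_2$.
   Context: $\mathrm{VF}$ is an algebraically closed valued field with value group $\Gamma$, valuation $v$ and the valuation topology. For $\bar b\in\mathrm{VF}^k$, $\epsilon\in\Gamma$, $\mathfrak{o}(\bar b,\epsilon)=\{\bar c: v(c_i-b_i)>\epsilon\text{ for all }i\}$. For $X\subseteq\mathrm{VF}^n\times\mathrm{VF}^m$, $\mathrm{pr}_{\le n}X$ is its projection to $\mathrm{VF}^n$ and $\mathrm{fib}(X,\bar c)=\{\bar d:(\bar c,\bar d)\in X\}$. A set $L\subseteq\mathrm{VF}^m$ is a limit set of $X$ at $\bar a$ if for every $\epsilon\in\Gamma$ there is $\delta\in\Gamma$ such that whenever $\bar c\in\mathfrak{o}(\bar a,\delta)\cap(\mathrm{pr}_{\le n}X\setminus\{\bar a\})$, $\mathrm{fib}(X,\bar c)\subseteq\bigcup_{\bar b\in L'}\mathfrak{o}(\bar b,\epsilon)$ for some $L'\subseteq L$; it is minimal if no proper subset is a limit set of $X$ at $\bar a$. With $Z=\mathrm{pr}_{\le n}X$, the notation $\lim_{Z\to\bar a}X=L$ means that $L$ is a topologically closed minimal limit set of $X$ at $\bar a$. *)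

theory Defs
  imports "HOL-Computational_Algebra.Polynomial"
begin

text \<open>A valuation on a field 'k with values in an ordered abelian group 'g,
  together with \<infinity>, represented by None (so v 0 = None).\<close>

definition valuation :: "('k::field \<Rightarrow> 'g::linordered_ab_group_add option) \<Rightarrow> bool" where
  "valuation v \<longleftrightarrow>
     (\<forall>x. v x = None \<longleftrightarrow> x = 0) \<and>
     (\<forall>x y g h. v x = Some g \<longrightarrow> v y = Some h \<longrightarrow> v (x * y) = Some (g + h)) \<and>
     (\<forall>x y g h. v x = Some g \<longrightarrow> v y = Some h \<longrightarrow>
        (case v (x + y) of None \<Rightarrow> True | Some k \<Rightarrow> min g h \<le> k))"

definition alg_closed_field :: "'k::field itself \<Rightarrow> bool" where
  "alg_closed_field _ \<longleftrightarrow> (\<forall>p :: 'k poly. degree p > 0 \<longrightarrow> (\<exists>x. poly p x = 0))"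

definition value_group :: "('k::field \<Rightarrow> 'g::linordered_ab_group_add option) \<Rightarrow> 'g set" where
  "value_group v = {g. \<exists>x. x \<noteq> 0 \<and> v x = Some g}"

definition val_gt :: "'g::linorder option \<Rightarrow> 'g \<Rightarrow> bool" where
  "val_gt a e = (case a of None \<Rightarrow> True | Some g \<Rightarrow> e < g)"

definition VF :: "nat \<Rightarrow> 'k list set" where
  "VF k = {x. length x = k}"

definition ball_o :: "('k::field \<Rightarrow> 'g::linordered_ab_group_add option) \<Rightarrow> 'k list \<Rightarrow> 'g \<Rightarrow> 'k list set" where
  "ball_o v b e = {c. length c = length b \<and> (\<forall>i<length b. val_gt (v (c ! i - b ! i)) e)}"

definition pr_le :: "('k list \<times> 'k list) set \<Rightarrow> 'k list set" where
  "pr_le X = fst ` X"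

definition fib :: "('k list \<times> 'k list) set \<Rightarrow> 'k list \<Rightarrow> 'k list set" where
  "fib X c = {d. (c, d) \<in> X}"

definition limit_set ::
  "('k::field \<Rightarrow> 'g::linordered_ab_group_add option) \<Rightarrow> nat \<Rightarrow> ('k list \<times> 'k list) set
     \<Rightarrow> 'k list \<Rightarrow> 'k list set \<Rightarrow> bool" where
  "limit_set v m X a L \<longleftrightarrow> L \<subseteq> VF m \<and>
     (\<forall>e\<in>value_group v. \<exists>d\<in>value_group v.
        \<forall>c \<in> ball_o v a d \<inter> (pr_le X - {a}).
          \<exists>L' \<subseteq> L. fib X c \<subseteq> (\<Union>b\<in>L'. ball_o v b e))"

definition minimal_limit_set ::
  "('k::field \<Rightarrow> 'g::linordered_ab_group_add option) \<Rightarrow> nat \<Rightarrow> ('k list \<times> 'k list) set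
     \<Rightarrow> 'k list \<Rightarrow> 'k list set \<Rightarrow> bool" where
  "minimal_limit_set v m X a L \<longleftrightarrow> limit_set v m X a L \<and>
     (\<forall>L'. L' \<subset> L \<longrightarrow> \<not> limit_set v m X a L')"

definition val_closed ::
  "('k::field \<Rightarrow> 'g::linordered_ab_group_add option) \<Rightarrow> nat \<Rightarrow> 'k list set \<Rightarrow> bool" where
  "val_closed v m L \<longleftrightarrow>
     (\<forall>b\<in>VF m - L. \<exists>e\<in>value_group v. ball_o v b e \<inter> L = {})"

definition is_lim ::
  "('k::field \<Rightarrow> 'g::linordered_ab_group_add option) \<Rightarrow> nat \<Rightarrow> ('k list \<times> 'k list) set
     \<Rightarrow> 'k list \<Rightarrow> 'k list set \<Rightarrow> bool" where
  "is_lim v m X a L \<longleftrightarrow> val_closed v m L \<and> minimal_limit_set v m X a L"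

end

theory Submission
  imports Defs
begin

lemma val_neg:
  assumes "valuation v"
  shows "v (- x) = v x"
proof -
  have z: "\<And>x. v x = None \<longleftrightarrow> x = 0" using assms unfolding valuation_def by simp
  have mul: "\<And>x y g h. v x = Some g \<Longrightarrow> v y = Some h \<Longrightarrow> v (x * y) = Some (g + h)"
    using assms unfolding valuation_def by simp
  obtain g where g: "v 1 = Some g" using z by (cases "v 1") auto
  have "v (1*1) = Some (g+g)" using mul[OF g g] by simp
  hence "g = 0" using g by simp
  obtain h where h: "v (-1) = Some h" using z by (cases "v (-1)") auto
  have "v ((-1)*(-1)) = Some (h+h)" using mul[OF h h] by simp
  hence hh: "h + h = 0" using g \<open>g=0\<close> by simp
  have "h = 0"
  proof (rule ccontr)
    assume "h \<noteq> 0"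
    then consider "h > 0" | "h < 0" using neq_iff by blast
    thus False using hh add_pos_pos[of h h] add_neg_neg[of h h] by cases auto
  qed
  show ?thesis
  proof (cases "x = 0")
    case True thus ?thesis by simp
  next
    case False
    then obtain k where k: "v x = Some k" using z by (cases "v x") auto
    have "v ((-1) * x) = Some (h + k)" using mul[OF h k] by simp
    thus ?thesis using k \<open>h=0\<close> by simp
  qed
qed

lemma val_ultra:
  assumes "valuation v" "val_gt (v x) e" "val_gt (v y) e"
  shows "val_gt (v (x + y)) e"
proof -
  have z: "\<And>x. v x = None \<longleftrightarrow> x = 0" using assms unfolding valuation_def by simp
  have u: "\<And>x y g h. v x = Some g \<Longrightarrow> v y = Some h \<Longrightarrow>
        (case v (x + y) of None \<Rightarrow> True | Some k \<Rightarrow> min g h \<le> k)"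
    using assms(1) unfolding valuation_def by simp
  show ?thesis
  proof (cases "v x")
    case None thus ?thesis using z assms by auto
  next
    case (Some g)
    show ?thesis
    proof (cases "v y")
      case None thus ?thesis using z assms by auto
    next
      case (Some h)
      have "e < g" "e < h" using assms \<open>v x = Some g\<close> Some by (auto simp: val_gt_def)
      thus ?thesis using u[OF \<open>v x = Some g\<close> Some]
        by (auto simp: val_gt_def min_def split: option.splits if_splits)
    qed
  qed
qed

lemma ball_sym:
  assumes val: "valuation v" and c: "c \<in> ball_o v b e"
  shows "b \<in> ball_o v c e"
  unfolding ball_o_def
proof (intro CollectI conjI allI impI)
  show "length b = length c" using c unfolding ball_o_def by simp
  fix i assume i: "i < length c"
  have h1: "val_gt (v (c ! i - b ! i)) e" using c i unfolding ball_o_def by simp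
  have "b ! i - c ! i = - (c ! i - b ! i)" by simp
  thus "val_gt (v (b ! i - c ! i)) e" using h1 val_neg[OF val] by metis
qed

lemma ball_trans:
  assumes val: "valuation v" and x: "x \<in> ball_o v b e" and y: "y \<in> ball_o v x e"
  shows "y \<in> ball_o v b e"
  unfolding ball_o_def
proof (intro CollectI conjI allI impI)
  show "length y = length b" using x y unfolding ball_o_def by simp
  fix i assume i: "i < length b"
  have h1: "val_gt (v (x ! i - b ! i)) e" using x i unfolding ball_o_def by simp
  have h2: "val_gt (v (y ! i - x ! i)) e" using x y i unfolding ball_o_def by simp
  have "y ! i - b ! i = (y ! i - x ! i) + (x ! i - b ! i)" by simp
  thus "val_gt (v (y ! i - b ! i)) e" using val_ultra[OF val h2 h1] by simp
qed

lemma ball_mono: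
  assumes "(e::'g::linordered_ab_group_add) \<le> e'"
  shows "ball_o v b e' \<subseteq> ball_o v b e"
proof -
  have "val_gt a e' \<Longrightarrow> val_gt a e" for a
    using assms unfolding val_gt_def by (cases a) auto
  thus ?thesis unfolding ball_o_def by blast
qed

lemma limit_set_iff:
  "limit_set v m X a L \<longleftrightarrow> L \<subseteq> VF m \<and>
     (\<forall>e\<in>value_group v. \<exists>d\<in>value_group v.
        \<forall>c \<in> ball_o v a d \<inter> (pr_le X - {a}).
          fib X c \<subseteq> (\<Union>b\<in>L. ball_o v b e))"
proof -
  have "(\<exists>L' \<subseteq> L. fib X c \<subseteq> (\<Union>b\<in>L'. ball_o v b e)) \<longleftrightarrow> fib X c \<subseteq> (\<Union>b\<in>L. ball_o v b e)"
    for c e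
  proof
    assume "\<exists>L' \<subseteq> L. fib X c \<subseteq> (\<Union>b\<in>L'. ball_o v b e)"
    then obtain L' where "L' \<subseteq> L" "fib X c \<subseteq> (\<Union>b\<in>L'. ball_o v b e)" by blast
    thus "fib X c \<subseteq> (\<Union>b\<in>L. ball_o v b e)" by blast
  next
    assume "fib X c \<subseteq> (\<Union>b\<in>L. ball_o v b e)"
    thus "\<exists>L' \<subseteq> L. fib X c \<subseteq> (\<Union>b\<in>L'. ball_o v b e)" by blast
  qed
  thus ?thesis unfolding limit_set_def by simp
qed

lemma vg_max: "e1 \<in> value_group v \<Longrightarrow> e2 \<in> value_group v \<Longrightarrow> max e1 e2 \<in> value_group v"
  by (simp add: max_def)

lemma remove_point:
  assumes lim: "limit_set v m X a L" and bL: "b \<in> L"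
    and H: "\<forall>e\<in>value_group v. \<exists>e'\<in>value_group v. e \<le> e' \<and> (\<exists>d\<in>value_group v.
        \<forall>c \<in> ball_o v a d \<inter> (pr_le X - {a}). \<forall>y \<in> fib X c \<inter> ball_o v b e'.
          \<exists>b'\<in>L - {b}. y \<in> ball_o v b' e')"
  shows "limit_set v m X a (L - {b})"
  unfolding limit_set_iff
proof (intro conjI ballI)
  show "L - {b} \<subseteq> VF m" using lim unfolding limit_set_iff by blast
next
  fix e assume e: "e \<in> value_group v"
  obtain e' d0 where e': "e' \<in> value_group v" "e \<le> e'" "d0 \<in> value_group v"
    and d0: "\<forall>c \<in> ball_o v a d0 \<inter> (pr_le X - {a}). \<forall>y \<in> fib X c \<inter> ball_o v b e'.
          \<exists>b'\<in>L - {b}. y \<in> ball_o v b' e'" using H e by blast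
  obtain d1 where d1: "d1 \<in> value_group v" "\<forall>c \<in> ball_o v a d1 \<inter> (pr_le X - {a}).
          fib X c \<subseteq> (\<Union>b\<in>L. ball_o v b e')" using lim e' unfolding limit_set_iff by blast
  show "\<exists>d\<in>value_group v. \<forall>c \<in> ball_o v a d \<inter> (pr_le X - {a}).
          fib X c \<subseteq> (\<Union>b\<in>L - {b}. ball_o v b e)"
  proof (intro bexI[of _ "max d0 d1"] ballI subsetI)
    show "max d0 d1 \<in> value_group v" using vg_max e' d1 by blast
    fix c y assume c: "c \<in> ball_o v a (max d0 d1) \<inter> (pr_le X - {a})" and y: "y \<in> fib X c"
    have c0: "c \<in> ball_o v a d0 \<inter> (pr_le X - {a})" "c \<in> ball_o v a d1 \<inter> (pr_le X - {a})"
      using c ball_mono[of d0 "max d0 d1" v a, OF max.cobounded1] ball_mono[of d1 "max d0 d1" v a, OF max.cobounded2] by auto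
    obtain b'' where b'': "b'' \<in> L" "y \<in> ball_o v b'' e'" using d1(2) c0(2) y by blast
    have sub: "\<And>z. ball_o v z e' \<subseteq> ball_o v z e" using ball_mono[OF e'(2)] by blast
    show "y \<in> (\<Union>b\<in>L - {b}. ball_o v b e)"
    proof (cases "b'' = b")
      case False thus ?thesis using b'' sub by blast
    next
      case True
      then obtain b' where "b' \<in> L - {b}" "y \<in> ball_o v b' e'" using d0 c0(1) y b'' by blast
      thus ?thesis using sub by blast
    qed
  qed
qed

lemma isolated:
  assumes val: "valuation v" and min: "minimal_limit_set v m X a L" and bL: "b \<in> L"
  shows "\<exists>e\<in>value_group v. ball_o v b e \<inter> L \<subseteq> {b}"
proof (rule ccontr)
  assume A: "\<not> ?thesis"
  have A': "\<exists>b'. b' \<in> L - {b} \<and> b' \<in> ball_o v b e" if "e \<in> value_group v" for e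
  proof -
    have "\<not> (ball_o v b e \<inter> L \<subseteq> {b})" using A that by blast
    thus ?thesis by blast
  qed
  have lim: "limit_set v m X a L" using min unfolding minimal_limit_set_def by blast
  have H: "\<exists>e'\<in>value_group v. e \<le> e' \<and> (\<exists>d\<in>value_group v.
        \<forall>c \<in> ball_o v a d \<inter> (pr_le X - {a}). \<forall>y \<in> fib X c \<inter> ball_o v b e'.
          \<exists>b'\<in>L - {b}. y \<in> ball_o v b' e')" if e: "e \<in> value_group v" for e
  proof -
    obtain b' where b': "b' \<in> L - {b}" "b' \<in> ball_o v b e" using A'[OF e] by blast
    have "\<forall>y \<in> ball_o v b e. y \<in> ball_o v b' e"
    proof
      fix y assume "y \<in> ball_o v b e"
      thus "y \<in> ball_o v b' e" using ball_trans[OF val ball_sym[OF val b'(2)]] by blast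
    qed
    hence "\<forall>c \<in> ball_o v a e \<inter> (pr_le X - {a}). \<forall>y \<in> fib X c \<inter> ball_o v b e.
          \<exists>b'\<in>L - {b}. y \<in> ball_o v b' e" using b'(1) by blast
    thus ?thesis using e by blast
  qed
  have "limit_set v m X a (L - {b})"
    using remove_point[OF lim bL] H by blast
  moreover have "L - {b} \<subset> L" using bL by blast
  ultimately show False using min unfolding minimal_limit_set_def by blast
qed

lemma limit_setD:
  assumes "limit_set v m X a L" "e \<in> value_group v"
  shows "\<exists>d\<in>value_group v. \<forall>c \<in> ball_o v a d \<inter> (pr_le X - {a}).
          fib X c \<subseteq> (\<Union>b\<in>L. ball_o v b e)"
  using assms unfolding limit_set_iff by simp

lemma limit_setVF: "limit_set v m X a L \<Longrightarrow> L \<subseteq> VF m"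
  unfolding limit_set_iff by simp

lemma union_limit:
  assumes "limit_set v m X1 a L1" "limit_set v m X2 a L2" "pr_le X1 = Z" "pr_le X2 = Z"
  shows "limit_set v m (X1 \<union> X2) a (L1 \<union> L2)"
  unfolding limit_set_iff
proof (intro conjI ballI)
  show "L1 \<union> L2 \<subseteq> VF m" using limit_setVF[OF assms(1)] limit_setVF[OF assms(2)] by simp
next
  fix e assume e: "e \<in> value_group v"
  obtain d1 where d1: "d1 \<in> value_group v" "\<And>c. c \<in> ball_o v a d1 \<inter> (pr_le X1 - {a}) \<Longrightarrow>
          fib X1 c \<subseteq> (\<Union>b\<in>L1. ball_o v b e)" using limit_setD[OF assms(1) e] by metis
  obtain d2 where d2: "d2 \<in> value_group v" "\<And>c. c \<in> ball_o v a d2 \<inter> (pr_le X2 - {a}) \<Longrightarrow>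
          fib X2 c \<subseteq> (\<Union>b\<in>L2. ball_o v b e)" using limit_setD[OF assms(2) e] by metis
  have pu: "pr_le (X1 \<union> X2) = Z" using assms(3,4) unfolding pr_le_def by auto
  have "\<forall>c \<in> ball_o v a (max d1 d2) \<inter> (pr_le (X1 \<union> X2) - {a}).
          fib (X1 \<union> X2) c \<subseteq> (\<Union>b\<in>L1 \<union> L2. ball_o v b e)"
  proof
    fix c assume c: "c \<in> ball_o v a (max d1 d2) \<inter> (pr_le (X1 \<union> X2) - {a})"
    have m1: "ball_o v a (max d1 d2) \<subseteq> ball_o v a d1" by (rule ball_mono) simp
    have m2: "ball_o v a (max d1 d2) \<subseteq> ball_o v a d2" by (rule ball_mono) simp
    have c1: "c \<in> ball_o v a d1 \<inter> (pr_le X1 - {a})" using c m1 pu assms(3) by blast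
    have c2: "c \<in> ball_o v a d2 \<inter> (pr_le X2 - {a})" using c m2 pu assms(4) by blast
    have f: "fib (X1 \<union> X2) c = fib X1 c \<union> fib X2 c" unfolding fib_def by auto
    have "fib X1 c \<subseteq> (\<Union>b\<in>L1 \<union> L2. ball_o v b e)" using d1(2)[OF c1] by blast
    moreover have "fib X2 c \<subseteq> (\<Union>b\<in>L1 \<union> L2. ball_o v b e)" using d2(2)[OF c2] by blast
    ultimately show "fib (X1 \<union> X2) c \<subseteq> (\<Union>b\<in>L1 \<union> L2. ball_o v b e)" using f by simp
  qed
  moreover have "max d1 d2 \<in> value_group v" using vg_max d1(1) d2(1) by blast
  ultimately show "\<exists>d\<in>value_group v. \<forall>c \<in> ball_o v a d \<inter> (pr_le (X1 \<union> X2) - {a}).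
          fib (X1 \<union> X2) c \<subseteq> (\<Union>b\<in>L1 \<union> L2. ball_o v b e)" by blast
qed

lemma val_closedD:
  assumes "val_closed v m L" "b \<in> VF m" "b \<notin> L"
  shows "\<exists>e\<in>value_group v. ball_o v b e \<inter> L = {}"
  using assms unfolding val_closed_def by simp

lemma max_ball:
  "ball_o v b (max e1 e2) \<subseteq> ball_o v b e1" "ball_o v b (max e1 e2) \<subseteq> ball_o v b e2"
  by (rule ball_mono, simp)+

lemma union_closed:
  assumes "val_closed v m L1" "val_closed v m L2"
  shows "val_closed v m (L1 \<union> L2)"
  unfolding val_closed_def
proof
  fix b assume b: "b \<in> VF m - (L1 \<union> L2)"
  obtain e1 where e1: "e1 \<in> value_group v" "ball_o v b e1 \<inter> L1 = {}"
    using val_closedD[OF assms(1)] b by auto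
  obtain e2 where e2: "e2 \<in> value_group v" "ball_o v b e2 \<inter> L2 = {}"
    using val_closedD[OF assms(2)] b by auto
  have "ball_o v b (max e1 e2) \<inter> (L1 \<union> L2) = {}"
    using e1(2) e2(2) max_ball[of v b e1 e2] by blast
  moreover have "max e1 e2 \<in> value_group v" using vg_max[OF e1(1) e2(1)] .
  ultimately show "\<exists>e\<in>value_group v. ball_o v b e \<inter> (L1 \<union> L2) = {}" by (rule bexI)
qed

lemma isolated_union:
  assumes val: "valuation v" and l1: "is_lim v m X1 a L1" and l2: "is_lim v m X2 a L2"
    and bL: "b \<in> L1"
  shows "\<exists>e\<in>value_group v. ball_o v b e \<inter> (L1 \<union> L2) \<subseteq> {b}"
proof -
  have min1: "minimal_limit_set v m X1 a L1" using l1 unfolding is_lim_def by simp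
  have min2: "minimal_limit_set v m X2 a L2" using l2 unfolding is_lim_def by simp
  obtain e1 where e1: "e1 \<in> value_group v" "ball_o v b e1 \<inter> L1 \<subseteq> {b}"
    using isolated[OF val min1 bL] by auto
  have "\<exists>e2\<in>value_group v. ball_o v b e2 \<inter> L2 \<subseteq> {b}"
  proof (cases "b \<in> L2")
    case True thus ?thesis using isolated[OF val min2 True] by simp
  next
    case False
    have "limit_set v m X1 a L1" using min1 unfolding minimal_limit_set_def by simp
    hence "L1 \<subseteq> VF m" by (rule limit_setVF)
    hence "b \<in> VF m" using bL by auto
    moreover have "val_closed v m L2" using l2 unfolding is_lim_def by simp
    ultimately obtain e2 where "e2 \<in> value_group v" "ball_o v b e2 \<inter> L2 = {}"
      using val_closedD False by metis
    thus ?thesis by auto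
  qed
  then obtain e2 where e2: "e2 \<in> value_group v" "ball_o v b e2 \<inter> L2 \<subseteq> {b}" by auto
  have "ball_o v b (max e1 e2) \<inter> (L1 \<union> L2) \<subseteq> {b}"
    using e1(2) e2(2) max_ball[of v b e1 e2] by blast
  moreover have "max e1 e2 \<in> value_group v" using vg_max[OF e1(1) e2(1)] .
  ultimately show ?thesis by (rule bexI)
qed

lemma minimal_part:
  assumes val: "valuation v" and l1: "is_lim v m X1 a L1" and l2: "is_lim v m X2 a L2"
    and bL: "b \<in> L1" and L': "L' \<subseteq> L1 \<union> L2" "b \<notin> L'"
    and limL': "limit_set v m (X1 \<union> X2) a L'"
  shows False
proof -
  obtain e0 where e0: "e0 \<in> value_group v" "ball_o v b e0 \<inter> (L1 \<union> L2) \<subseteq> {b}"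
    using isolated_union[OF val l1 l2 bL] by auto
  have min1: "minimal_limit_set v m X1 a L1" using l1 unfolding is_lim_def by simp
  hence lim1: "limit_set v m X1 a L1" unfolding minimal_limit_set_def by simp
  have H: "\<exists>e'\<in>value_group v. e \<le> e' \<and> (\<exists>d\<in>value_group v.
        \<forall>c \<in> ball_o v a d \<inter> (pr_le X1 - {a}). \<forall>y \<in> fib X1 c \<inter> ball_o v b e'.
          \<exists>b'\<in>L1 - {b}. y \<in> ball_o v b' e')" if e: "e \<in> value_group v" for e
  proof -
    define e' where "e' = max e e0"
    have e'v: "e' \<in> value_group v" using vg_max[OF e e0(1)] e'_def by simp
    obtain d where d: "d \<in> value_group v" "\<And>c. c \<in> ball_o v a d \<inter> (pr_le (X1 \<union> X2) - {a}) \<Longrightarrow>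
          fib (X1 \<union> X2) c \<subseteq> (\<Union>b\<in>L'. ball_o v b e')"
      using limit_setD[OF limL' e'v] by metis
    have key: "\<forall>c \<in> ball_o v a d \<inter> (pr_le X1 - {a}). \<forall>y \<in> fib X1 c \<inter> ball_o v b e'.
          \<exists>b'\<in>L1 - {b}. y \<in> ball_o v b' e'"
    proof (intro ballI)
      fix c y assume c: "c \<in> ball_o v a d \<inter> (pr_le X1 - {a})" and y: "y \<in> fib X1 c \<inter> ball_o v b e'"
      have c': "c \<in> ball_o v a d \<inter> (pr_le (X1 \<union> X2) - {a})" using c unfolding pr_le_def by auto
      have y': "y \<in> fib (X1 \<union> X2) c" using y unfolding fib_def by auto
      obtain b' where b': "b' \<in> L'" "y \<in> ball_o v b' e'" using d(2)[OF c'] y' by blast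
      have yb: "y \<in> ball_o v b e'" using y by simp
      have "b' \<in> ball_o v b e'" using ball_trans[OF val yb ball_sym[OF val b'(2)]] .
      hence "b' \<in> ball_o v b e0" using max_ball(2)[of v b e e0] unfolding e'_def by blast
      hence "b' = b" using e0(2) b'(1) L'(1) by blast
      thus "\<exists>b'\<in>L1 - {b}. y \<in> ball_o v b' e'" using b'(1) L'(2) by simp
    qed
    have "e \<le> e'" unfolding e'_def by simp
    thus ?thesis using key e'v d(1) by blast
  qed
  have "limit_set v m X1 (a) (L1 - {b})" using remove_point[OF lim1 bL] H by blast
  moreover have "L1 - {b} \<subset> L1" using bL by blast
  ultimately show False using min1 unfolding minimal_limit_set_def by blast
qed

theorem lemma3p3:
  fixes v :: "'k::field \<Rightarrow> 'g::linordered_ab_group_add option"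
    and n m :: nat
    and X1 X2 :: "('k list \<times> 'k list) set"
    and Z :: "'k list set"
    and a :: "'k list"
    and L1 L2 :: "'k list set"
  assumes "valuation v"
    and "alg_closed_field TYPE('k)"
    and "X1 \<subseteq> VF n \<times> VF m" and "X2 \<subseteq> VF n \<times> VF m"
    and "pr_le X1 = Z" and "pr_le X2 = Z"
    and "a \<in> VF n"
    and "is_lim v m X1 a L1" and "is_lim v m X2 a L2"
  shows "is_lim v m (X1 \<union> X2) a (L1 \<union> L2)"
proof -
  have c1: "val_closed v m L1" using assms(8) unfolding is_lim_def by simp
  have c2: "val_closed v m L2" using assms(9) unfolding is_lim_def by simp
  have l1: "limit_set v m X1 a L1" using assms(8) unfolding is_lim_def minimal_limit_set_def by simp
  have l2: "limit_set v m X2 a L2" using assms(9) unfolding is_lim_def minimal_limit_set_def by simp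
  have c: "val_closed v m (L1 \<union> L2)" using union_closed[OF c1 c2] .
  have l: "limit_set v m (X1 \<union> X2) a (L1 \<union> L2)" using union_limit[OF l1 l2 assms(5,6)] .
  have nl: "\<not> limit_set v m (X1 \<union> X2) a L'" if sub: "L' \<subset> L1 \<union> L2" for L'
  proof
    assume lL: "limit_set v m (X1 \<union> X2) a L'"
    obtain b where b: "b \<in> L1 \<union> L2" "b \<notin> L'" using sub by blast
    have sub': "L' \<subseteq> L1 \<union> L2" using sub by simp
    show False
    proof (cases "b \<in> L1")
      case True show False using minimal_part[OF assms(1,8,9) True sub' b(2) lL] .
    next
      case False
      hence b2: "b \<in> L2" using b(1) by simp
      have sub'': "L' \<subseteq> L2 \<union> L1" using sub' by blast
      have lL': "limit_set v m (X2 \<union> X1) a L'" using lL by (simp add: Un_commute)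
      show False using minimal_part[OF assms(1,9,8) b2 sub'' b(2) lL'] .
    qed
  qed
  have "minimal_limit_set v m (X1 \<union> X2) a (L1 \<union> L2)"
    unfolding minimal_limit_set_def using l nl by simp
  thus ?thesis unfolding is_lim_def using c by simp
qed

end
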